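(* Let $N\ge 2$ and $m\ge N$ be integers, let $c_1,\dots,c_m$ be contents with request probabilities $\rho_1,\dots,\rho_m\ge 0$, $\sum_{\ell=1}^m\rho_\ell=1$. Consider users $u_1,\dots,u_N$, where $u_\kappa$ caches exactly $c_\kappa$, and each user $u_\mu$ independently requests a single content $R_\mu$ with $\Pr(R_\mu=c_\ell)=\rho_\ell$. Let $K$ be uniform on $\{1,\dots,N\}$, independent of the requests. Then the probability $\mathcal{P}_{\textup{TX}}$ that $u_K$ operates in a transmitting mode, i.e. in one of the modes SR-HDTX, HDTX or FDTR, is \[ \mathcal{P}_{\textup{TX}} = \frac{1}{N} \sum_{\kappa=1}^{N}\left(1-\left(1-\rho_\kappa\right)^{N-1}\right). \]
   Context: For a user $u_\kappa$, let $S_\kappa$ be the event that there exists $\mu\ne\kappa$, $\mu\in\{1,\dots,N\}$, with $R_\mu=c_\kappa$. Modes of $u_\kappa$: SR-HDTX: $R_\kappa=c_\kappa$ and $S_\kappa$; FDTR: $R_\kappa=c_\mu$ for some $\mu\in\{1,\dots,N\}\setminus\{\kappa\}$, and $S_\kappa$; HDTX: $R_\kappa\notin\{c_1,\dots,c_N\}$ and $S_\kappa$. *)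

theory Defs
  imports "HOL-Probability.Probability"
begin

text \<open>Users are indexed by 1..N; user kappa caches content c kappa; R mu is the content
requested by user mu.\<close>

definition S_event :: "nat \<Rightarrow> (nat \<Rightarrow> 'c) \<Rightarrow> (nat \<Rightarrow> 'c) \<Rightarrow> nat \<Rightarrow> bool" where
  "S_event N c R \<kappa> \<longleftrightarrow> (\<exists>\<mu>\<in>{1..N}. \<mu> \<noteq> \<kappa> \<and> R \<mu> = c \<kappa>)"

definition SR_HDTX :: "nat \<Rightarrow> (nat \<Rightarrow> 'c) \<Rightarrow> (nat \<Rightarrow> 'c) \<Rightarrow> nat \<Rightarrow> bool" where
  "SR_HDTX N c R \<kappa> \<longleftrightarrow> R \<kappa> = c \<kappa> \<and> S_event N c R \<kappa>"

definition FDTR :: "nat \<Rightarrow> (nat \<Rightarrow> 'c) \<Rightarrow> (nat \<Rightarrow> 'c) \<Rightarrow> nat \<Rightarrow> bool" where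
  "FDTR N c R \<kappa> \<longleftrightarrow> (\<exists>\<mu>\<in>{1..N} - {\<kappa>}. R \<kappa> = c \<mu>) \<and> S_event N c R \<kappa>"

definition HDTX :: "nat \<Rightarrow> (nat \<Rightarrow> 'c) \<Rightarrow> (nat \<Rightarrow> 'c) \<Rightarrow> nat \<Rightarrow> bool" where
  "HDTX N c R \<kappa> \<longleftrightarrow> R \<kappa> \<notin> c ` {1..N} \<and> S_event N c R \<kappa>"

definition transmitting :: "nat \<Rightarrow> (nat \<Rightarrow> 'c) \<Rightarrow> (nat \<Rightarrow> 'c) \<Rightarrow> nat \<Rightarrow> bool" where
  "transmitting N c R \<kappa> \<longleftrightarrow> SR_HDTX N c R \<kappa> \<or> HDTX N c R \<kappa> \<or> FDTR N c R \<kappa>"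

definition joint_pmf :: "nat \<Rightarrow> 'c pmf \<Rightarrow> (nat \<times> (nat \<Rightarrow> 'c)) pmf" where
  "joint_pmf N p = pair_pmf (pmf_of_set {1..N}) (Pi_pmf {1..N} undefined (\<lambda>_. p))"

definition P_TX :: "nat \<Rightarrow> (nat \<Rightarrow> 'c) \<Rightarrow> 'c pmf \<Rightarrow> real" where
  "P_TX N c p = measure_pmf.prob (joint_pmf N p) {(k, R). transmitting N c R k}"

end

theory Submission
  imports Defs
begin

lemma prob_pair_of_set:
  assumes "finite S" "S \<noteq> {}"
  shows "measure_pmf.prob (pair_pmf (pmf_of_set S) B) E
         = (\<Sum>k\<in>S. measure_pmf.prob B {R. (k,R)\<in>E}) / card S"
proof -
  have "emeasure (measure_pmf (pair_pmf (pmf_of_set S) B)) E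
      = (\<integral>\<^sup>+a. \<integral>\<^sup>+b. indicator E (a,b) \<partial>B \<partial>pmf_of_set S)"
    by (simp add: nn_integral_pair_pmf'[symmetric])
  also have "\<dots> = (\<integral>\<^sup>+a. emeasure (measure_pmf B) {R. (a,R)\<in>E} \<partial>pmf_of_set S)"
  proof (rule nn_integral_cong)
    fix a
    have "(\<lambda>b. indicator E (a,b) :: ennreal) = indicator {R. (a,R)\<in>E}"
      by (auto simp: indicator_def)
    then show "(\<integral>\<^sup>+b. indicator E (a,b) \<partial>B) = emeasure (measure_pmf B) {R. (a,R)\<in>E}"
      by simp
  qed
  also have "\<dots> = (\<Sum>k\<in>S. emeasure (measure_pmf B) {R. (k,R)\<in>E}) / card S"
    using assms by (simp add: nn_integral_pmf_of_set)
  also have "\<dots> = ennreal ((\<Sum>k\<in>S. measure_pmf.prob B {R. (k,R)\<in>E}) / card S)"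
    using assms
  proof -
    have c: "0 < real (card S)" using assms by (simp add: card_gt_0_iff)
    have s0: "0 \<le> (\<Sum>k\<in>S. measure_pmf.prob B {R. (k,R)\<in>E})" by (simp add: sum_nonneg)
    show ?thesis
      using divide_ennreal[OF s0 c]
      by (simp add: measure_pmf.emeasure_eq_measure sum_ennreal ennreal_of_nat_eq_real_of_nat)
  qed
  finally show ?thesis
    by (simp add: measure_pmf.emeasure_eq_measure sum_nonneg)
qed

theorem corollary1:
  fixes N m :: nat and c :: "nat \<Rightarrow> 'c" and \<rho> :: "nat \<Rightarrow> real" and p :: "'c pmf"
  assumes "N \<ge> 2" and "m \<ge> N"
    and "inj_on c {1..m}"
    and "\<forall>l\<in>{1..m}. \<rho> l \<ge> 0"
    and "(\<Sum>l=1..m. \<rho> l) = 1"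
    and "set_pmf p \<subseteq> c ` {1..m}"
    and "\<forall>l\<in>{1..m}. pmf p (c l) = \<rho> l"
  shows "P_TX N c p = (1 / real N) * (\<Sum>\<kappa>=1..N. 1 - (1 - \<rho> \<kappa>) ^ (N - 1))"
proof -
  let ?B = "Pi_pmf {1..N} undefined (\<lambda>_. p)"
  have ne: "{1..N} \<noteq> {}" using assms(1) by auto
  have key: "measure_pmf.prob ?B {R. transmitting N c R k} = 1 - (1 - \<rho> k) ^ (N - 1)"
    if k: "k \<in> {1..N}" for k
  proof -
    have tr: "transmitting N c R k \<longleftrightarrow> S_event N c R k" for R
      unfolding transmitting_def SR_HDTX_def HDTX_def FDTR_def by blast
    have compl: "{R. transmitting N c R k} = UNIV - Pi {1..N} (\<lambda>\<mu>. if \<mu> = k then UNIV else - {c k})"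
      by (auto simp: tr S_event_def Pi_def split: if_splits)
    have "measure_pmf.prob ?B (Pi {1..N} (\<lambda>\<mu>. if \<mu> = k then UNIV else - {c k}))
        = (\<Prod>\<mu>\<in>{1..N}. measure_pmf.prob p (if \<mu> = k then UNIV else - {c k}))"
      by (rule measure_Pi_pmf_Pi) simp
    also have "\<dots> = (\<Prod>\<mu>\<in>{1..N} - {k}. 1 - pmf p (c k))"
    proof -
      have "(\<Prod>\<mu>\<in>{1..N}. measure_pmf.prob p (if \<mu> = k then UNIV else - {c k}))
          = measure_pmf.prob p UNIV * (\<Prod>\<mu>\<in>{1..N} - {k}. measure_pmf.prob p (- {c k}))"
        using k by (simp add: prod.remove)
      also have "\<dots> = (\<Prod>\<mu>\<in>{1..N} - {k}. 1 - pmf p (c k))"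
      proof -
        have h: "measure_pmf.prob p (UNIV - {c k}) = 1 - pmf p (c k)"
          using measure_pmf.prob_compl[of "{c k}" p] by (simp add: measure_pmf_single)
        have e: "- {c k} = UNIV - {c k}" by auto
        show ?thesis unfolding e h by simp
      qed
      finally show ?thesis .
    qed
    also have "\<dots> = (1 - \<rho> k) ^ (N - 1)"
      using k assms(2,7) by simp
    finally have P: "measure_pmf.prob ?B (Pi {1..N} (\<lambda>\<mu>. if \<mu> = k then UNIV else - {c k})) = (1 - \<rho> k) ^ (N - 1)" .
    show ?thesis
      unfolding compl using P measure_pmf.prob_compl[of "Pi {1..N} (\<lambda>\<mu>. if \<mu> = k then UNIV else - {c k})" ?B]
      by simp
  qed
  have "P_TX N c p = (\<Sum>k\<in>{1..N}. measure_pmf.prob ?B {R. transmitting N c R k}) / card {1..N}"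
    unfolding P_TX_def joint_pmf_def
    by (subst prob_pair_of_set) (use ne in auto)
  also have "\<dots> = (\<Sum>k=1..N. 1 - (1 - \<rho> k) ^ (N - 1)) / N"
    using key by simp
  finally show ?thesis by simp
qed

end
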